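(* For all $n\geq 1$ and $m\geq 2$, \[2\bar{a}_m(n)=\bar{a}_{m-1}(2n,n).\]
   Context: An overpartition of $n$ is a partition of $n$ in which the first occurrence of each distinct part value may be overlined; an overlined part and a non-overlined part of the same value count as equal. $\bar{a}_m(n)$ is the number of overpartitions of $n$ in which the smallest part value occurs at least $m$ times, and $\bar{a}_m(N,\ell)$ is the number of overpartitions of $N$ in which the smallest part value occurs at least $m$ times and the largest part minus the smallest part equals $\ell$. *)

theory Defs
  imports Main "HOL-Library.Multiset"
begin

text \<open>An overpartition of n is represented as a pair (M, V): M is the multiset of
  part values (all positive, summing to n), and V is the set of part values whose
  first occurrence is overlined (V is a subset of the distinct part values).\<close>

definition overpartitions :: "nat \<Rightarrow> (nat multiset \<times> nat set) set" where
  "overpartitions n = {(M, V). (\<forall>x\<in>#M. 0 < x) \<and> sum_mset M = n \<and> V \<subseteq> set_mset M}"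

definition abar :: "nat \<Rightarrow> nat \<Rightarrow> nat" where
  "abar m n = card {(M, V) \<in> overpartitions n.
       M \<noteq> {#} \<and> m \<le> count M (Min (set_mset M))}"

definition abar2 :: "nat \<Rightarrow> nat \<Rightarrow> nat \<Rightarrow> nat" where
  "abar2 m N l = card {(M, V) \<in> overpartitions N.
       M \<noteq> {#} \<and> m \<le> count M (Min (set_mset M)) \<and>
       Max (set_mset M) - Min (set_mset M) = l}"

end

theory Submission
  imports Defs
begin

lemma mem_le_sum: "(x::nat) \<in># M \<Longrightarrow> x \<le> sum_mset M"
  by (metis le_add1 sum_mset.remove)

definition fwd :: "nat \<Rightarrow> (nat multiset \<times> nat set) \<times> bool \<Rightarrow> nat multiset \<times> nat set" where
  "fwd n p = (let M = fst (fst p); V = snd (fst p); s = Min (set_mset M) in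
     (add_mset (s + n) (M - {#s#}), if snd p then insert (s + n) V else V))"

definition bwd :: "(nat multiset \<times> nat set) \<Rightarrow> (nat multiset \<times> nat set) \<times> bool" where
  "bwd p = (let M = fst p; V = snd p; s = Min (set_mset M); L = Max (set_mset M) in
     ((add_mset s (M - {#L#}), V - {L}), L \<in> V))"

lemma fwd_props:
  fixes n m :: nat and M :: "nat multiset"
  assumes n: "1 \<le> n" and m: "2 \<le> m"
    and pos: "\<forall>x\<in>#M. 0 < x" and sm: "sum_mset M = n" and VM: "V \<subseteq> set_mset M"
    and ne: "M \<noteq> {#}" and cnt: "m \<le> count M (Min (set_mset M))"
  defines "s \<equiv> Min (set_mset M)"
  defines "M2 \<equiv> add_mset (s + n) (M - {#s#})"
  shows "(\<forall>x\<in>#M2. 0 < x) \<and> sum_mset M2 = 2 * n \<and> set_mset M2 = insert (s+n) (set_mset M)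
     \<and> Min (set_mset M2) = s \<and> Max (set_mset M2) = s + n \<and> count M2 s = count M s - 1
     \<and> s + n \<notin> set_mset M \<and> s \<in># M"
proof -
  have fin: "finite (set_mset M)" by simp
  have sin: "s \<in># M" unfolding s_def using ne fin by (simp add: Min_in)
  have smin: "\<And>x. x \<in># M \<Longrightarrow> s \<le> x" unfolding s_def using fin by simp
  have spos: "0 < s" using pos sin by blast
  have le: "\<And>x. x \<in># M \<Longrightarrow> x \<le> n" using mem_le_sum sm by blast
  have notin: "s + n \<notin> set_mset M" using le spos by fastforce
  have c2: "s \<in># M - {#s#}" using cnt m unfolding s_def[symmetric] by (simp add: in_diff_count)
  have setd: "set_mset (M - {#s#}) = set_mset M" using more_than_one_mset_mset_diff[OF c2] .
  have setM2: "set_mset M2 = insert (s+n) (set_mset M)" unfolding M2_def using setd by simp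
  have sum2: "sum_mset M2 = 2 * n"
  proof -
    have "sum_mset M = s + sum_mset (M - {#s#})" using sum_mset.remove[OF sin] .
    then show ?thesis unfolding M2_def using sm by simp
  qed
  have minM2: "Min (set_mset M2) = s"
    unfolding setM2 using sin smin fin by (intro Min_eqI) auto
  have maxM2: "Max (set_mset M2) = s + n"
    unfolding setM2 using le fin by (intro Max_eqI) (auto dest!: le)
  have cM2: "count M2 s = count M s - 1" unfolding M2_def using n by simp
  show ?thesis using setM2 sum2 minM2 maxM2 cM2 notin sin pos spos
    unfolding setM2 by auto
qed

lemma bwd_props:
  fixes n m :: nat and M :: "nat multiset"
  assumes n: "1 \<le> n" and m: "2 \<le> m"
    and pos: "\<forall>x\<in>#M. 0 < x" and sm: "sum_mset M = 2 * n" and VM: "V \<subseteq> set_mset M"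
    and ne: "M \<noteq> {#}" and cnt: "m - 1 \<le> count M (Min (set_mset M))"
    and d: "Max (set_mset M) - Min (set_mset M) = n"
  defines "s \<equiv> Min (set_mset M)"
  defines "L \<equiv> Max (set_mset M)"
  defines "M1 \<equiv> add_mset s (M - {#L#})"
  shows "(\<forall>x\<in>#M1. 0 < x) \<and> sum_mset M1 = n \<and> set_mset M1 = set_mset M - {L}
     \<and> Min (set_mset M1) = s \<and> count M1 s = count M s + 1 \<and> L = s + n \<and> L \<in># M \<and> s \<in># M
     \<and> (\<forall>x\<in>#M1. x < L)"
proof -
  have fin: "finite (set_mset M)" by simp
  have sin: "s \<in># M" unfolding s_def using ne fin by (simp add: Min_in)
  have Lin: "L \<in># M" unfolding L_def using ne fin by (simp add: Max_in)
  have smin: "\<And>x. x \<in># M \<Longrightarrow> s \<le> x" unfolding s_def using fin by simp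
  have Lmax: "\<And>x. x \<in># M \<Longrightarrow> x \<le> L" unfolding L_def using fin by simp
  have spos: "0 < s" using pos sin by blast
  have Leq: "L = s + n" using d smin Lin unfolding s_def[symmetric] L_def[symmetric] by force
  have sneL: "s \<noteq> L" using Leq n by simp
  have sumM: "sum_mset M = L + sum_mset (M - {#L#})" using sum_mset.remove[OF Lin] .
  have c1: "L \<notin># M - {#L#}"
  proof
    assume h: "L \<in># M - {#L#}"
    have "sum_mset (M - {#L#}) \<ge> L" using mem_le_sum[OF h] .
    then show False using sumM sm Leq spos by simp
  qed
  have setd: "set_mset (M - {#L#}) = set_mset M - {L}" using at_most_one_mset_mset_diff[OF c1] .
  have setM1: "set_mset M1 = set_mset M - {L}" unfolding M1_def using setd sin sneL by auto
  have sum1: "sum_mset M1 = n" unfolding M1_def using sumM sm Leq by simp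
  have minM1: "Min (set_mset M1) = s"
    unfolding setM1 using sin smin fin sneL by (intro Min_eqI) auto
  have cM1: "count M1 s = count M s + 1" unfolding M1_def using sneL by simp
  have lt: "\<forall>x\<in>#M1. x < L" unfolding M1_def using Lmax setd sneL Leq by force
  show ?thesis using setM1 sum1 minM1 cM1 Leq Lin sin lt pos spos
    unfolding M1_def by auto
qed

theorem theorem5p3:
  fixes n m :: nat
  assumes "1 \<le> n" and "2 \<le> m"
  shows "2 * abar m n = abar2 (m - 1) (2 * n) n"
proof -
  define A where "A = {(M, V) \<in> overpartitions n.
       M \<noteq> {#} \<and> m \<le> count M (Min (set_mset M))}"
  define B where "B = {(M, V) \<in> overpartitions (2*n).
       M \<noteq> {#} \<and> m - 1 \<le> count M (Min (set_mset M)) \<and>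
       Max (set_mset M) - Min (set_mset M) = n}"
  have "bij_betw (fwd n) (A \<times> UNIV) B"
  proof (rule bij_betw_byWitness[where f' = bwd])
    show "\<forall>a\<in>A \<times> UNIV. bwd (fwd n a) = a"
    proof
      fix a assume "a \<in> A \<times> (UNIV :: bool set)"
      then obtain M V b where a: "a = ((M, V), b)" and h: "(M, V) \<in> A" by auto
      from h have pos: "\<forall>x\<in>#M. 0 < x" and sm: "sum_mset M = n" and VM: "V \<subseteq> set_mset M"
        and ne: "M \<noteq> {#}" and cnt: "m \<le> count M (Min (set_mset M))"
        unfolding A_def overpartitions_def by auto
      define s where "s = Min (set_mset M)"
      define M2 where "M2 = add_mset (s + n) (M - {#s#})"
      define V2 where "V2 = (if b then insert (s + n) V else V)"
      have P: "Min (set_mset M2) = s" "Max (set_mset M2) = s + n" "s + n \<notin> set_mset M" "s \<in># M"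
        using fwd_props[OF assms pos sm VM ne cnt] unfolding s_def[symmetric] M2_def[symmetric] by auto
      have nV: "s + n \<notin> V" using P VM by blast
      have f: "fwd n a = (M2, V2)" unfolding a fwd_def Let_def M2_def V2_def s_def by simp
      have e1: "add_mset s (M2 - {#s + n#}) = M" unfolding M2_def using P(4) by (simp add: insert_DiffM)
      have e2: "V2 - {s + n} = V" unfolding V2_def using nV by auto
      have e3: "(s + n \<in> V2) = b" unfolding V2_def using nV by auto
      show "bwd (fwd n a) = a" unfolding f unfolding bwd_def Let_def fst_conv snd_conv P(1,2) e1 e2 e3 a ..
    qed
    show "\<forall>a\<in>B. fwd n (bwd a) = a"
    proof
      fix a assume "a \<in> B"
      then obtain M V where a: "a = (M, V)" and pos: "\<forall>x\<in>#M. 0 < x" and sm: "sum_mset M = 2 * n" and VM: "V \<subseteq> set_mset M"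
        and ne: "M \<noteq> {#}" and cnt: "m - 1 \<le> count M (Min (set_mset M))"
        and d: "Max (set_mset M) - Min (set_mset M) = n"
        unfolding B_def overpartitions_def by auto
      define s where "s = Min (set_mset M)"
      define L where "L = Max (set_mset M)"
      define M1 where "M1 = add_mset s (M - {#L#})"
      have P: "Min (set_mset M1) = s" "L = s + n" "L \<in># M"
        using bwd_props[OF assms pos sm VM ne cnt d] unfolding s_def[symmetric] L_def[symmetric] M1_def[symmetric] by auto
      have f: "bwd a = ((M1, V - {L}), L \<in> V)" unfolding a bwd_def Let_def M1_def s_def L_def by simp
      have e1: "add_mset L (M1 - {#s#}) = M" unfolding M1_def using P(3) by (simp add: insert_DiffM)
      have e2: "(if L \<in> V then insert L (V - {L}) else V - {L}) = V" by auto
      show "fwd n (bwd a) = a" unfolding f unfolding fwd_def Let_def fst_conv snd_conv P(1) P(2)[symmetric] e1 e2 a ..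
    qed
    show "fwd n ` (A \<times> UNIV) \<subseteq> B"
    proof
      fix y assume "y \<in> fwd n ` (A \<times> (UNIV :: bool set))"
      then obtain M V b where y: "y = fwd n ((M, V), b)" and h: "(M, V) \<in> A" by auto
      from h have pos: "\<forall>x\<in>#M. 0 < x" and sm: "sum_mset M = n" and VM: "V \<subseteq> set_mset M"
        and ne: "M \<noteq> {#}" and cnt: "m \<le> count M (Min (set_mset M))"
        unfolding A_def overpartitions_def by auto
      define s where "s = Min (set_mset M)"
      define M2 where "M2 = add_mset (s + n) (M - {#s#})"
      define V2 where "V2 = (if b then insert (s + n) V else V)"
      have P: "\<forall>x\<in>#M2. 0 < x" "sum_mset M2 = 2 * n" "set_mset M2 = insert (s+n) (set_mset M)"
        "Min (set_mset M2) = s" "Max (set_mset M2) = s + n" "count M2 s = count M s - 1"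
        using fwd_props[OF assms pos sm VM ne cnt] unfolding s_def[symmetric] M2_def[symmetric] by auto
      have f: "y = (M2, V2)" unfolding y fwd_def Let_def M2_def V2_def s_def by simp
      have q1: "V2 \<subseteq> set_mset M2" unfolding V2_def P(3) using VM by auto
      have q2: "M2 \<noteq> {#}" unfolding M2_def by simp
      have q3: "m - 1 \<le> count M2 (Min (set_mset M2))" unfolding P(4) P(6) using cnt s_def by simp
      have q4: "Max (set_mset M2) - Min (set_mset M2) = n" unfolding P(4) P(5) by simp
      show "y \<in> B" unfolding f B_def overpartitions_def using P(1,2) q1 q2 q3 q4 by simp
    qed
    show "bwd ` B \<subseteq> A \<times> UNIV"
    proof
      fix y assume "y \<in> bwd ` B"
      then obtain M V where y: "y = bwd (M, V)" and h: "(M, V) \<in> B" by auto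
      from h have pos: "\<forall>x\<in>#M. 0 < x" and sm: "sum_mset M = 2 * n" and VM: "V \<subseteq> set_mset M"
        and ne: "M \<noteq> {#}" and cnt: "m - 1 \<le> count M (Min (set_mset M))"
        and d: "Max (set_mset M) - Min (set_mset M) = n"
        unfolding B_def overpartitions_def by auto
      define s where "s = Min (set_mset M)"
      define L where "L = Max (set_mset M)"
      define M1 where "M1 = add_mset s (M - {#L#})"
      have P: "\<forall>x\<in>#M1. 0 < x" "sum_mset M1 = n" "set_mset M1 = set_mset M - {L}"
        "Min (set_mset M1) = s" "count M1 s = count M s + 1"
        using bwd_props[OF assms pos sm VM ne cnt d] unfolding s_def[symmetric] L_def[symmetric] M1_def[symmetric] by auto
      have f: "y = ((M1, V - {L}), L \<in> V)" unfolding y bwd_def Let_def M1_def s_def L_def by simp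
      have q1: "V - {L} \<subseteq> set_mset M1" unfolding P(3) using VM by auto
      have q2: "M1 \<noteq> {#}" unfolding M1_def by simp
      have q3: "m \<le> count M1 (Min (set_mset M1))" unfolding P(4) P(5) using cnt s_def assms(2) by simp
      show "y \<in> A \<times> UNIV" unfolding f A_def overpartitions_def using P(1,2) q1 q2 q3 by simp
    qed
  qed
  then have "card B = card (A \<times> (UNIV :: bool set))" by (simp add: bij_betw_same_card)
  also have "\<dots> = 2 * card A" by (simp add: card_cartesian_product)
  finally show ?thesis unfolding abar_def abar2_def A_def B_def by simp
qed

end
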